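(* Let $A:\mathbb{R}\to\mathbb{R}^{n\times n}$, $t\mapsto A(t)=(a_{kl}(t))$, be piecewise continuous such that for every $t$ the matrix $A(t)$ is Metzler with zero row sums, and let $\zeta$ be a solution of $\dot{x}=A(t)x$ defined on $[t_0,t_1]$. Let $G,H$ be nonempty disjoint sets with $G\cup H=\{1,\dots,n\}$, and define $a_{GH}=\sum_{k\in G,\,l\in H}\int_{t_0}^{t_1}a_{kl}(t)\,\mathrm{d}t$, $a_{HG}=\sum_{k\in H,\,l\in G}\int_{t_0}^{t_1}a_{kl}(t)\,\mathrm{d}t$, $a_{HH}=\sum_{k,l\in H,\,k\neq l}\int_{t_0}^{t_1}a_{kl}(t)\,\mathrm{d}t$. Let $g^{\min}=\min_{k\in G}\zeta_k(t_0)$, $g^{\max}=\max_{k\in G}\zeta_k(t_0)$, and let $\mu^{\min},\mu^{\max}$ be real numbers with $\mu^{\min}\le\min_{1\le k\le n}\zeta_k(t_0)$ and $\mu^{\max}\ge\max_{1\le k\le n}\zeta_k(t_0)$. Then: (i) every component $\zeta_k(t_1)$ with $k\in G$ lies in the interval $[\mu^{\min}+(g^{\min}-\mu^{\min})e^{-a_{GH}},\ \mu^{\max}-(\mu^{\max}-g^{\max})e^{-a_{GH}}]$; (ii) at least one component $\zeta_k(t_1)$ with $k\in H$ lies in the interval $[\mu^{\min}+(g^{\min}-\mu^{\min})\beta,\ \mu^{\max}-(\mu^{\max}-g^{\max})\beta]$, where $$\beta=\frac{e^{-a_{GH}}\,a_{HG}/|H|}{1+e^{a_{HH}}a_{HG}/|H|+e^{a_{HH}}a_{HH}}$$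 and $|H|$ is the number of elements of $H$.
   Context: A real square matrix is Metzler if all its off-diagonal entries are nonnegative; it has zero row sums if each of its rows sums to zero. *)

theory Defs
  imports "HOL-Analysis.Analysis"
begin

definition metzler :: "real^'n^'n \<Rightarrow> bool" where
  "metzler M \<longleftrightarrow> (\<forall>k l. k \<noteq> l \<longrightarrow> 0 \<le> M $ k $ l)"

definition zero_row_sums :: "real^'n^'n \<Rightarrow> bool" where
  "zero_row_sums M \<longleftrightarrow> (\<forall>k. (\<Sum>l\<in>UNIV. M $ k $ l) = 0)"

definition piecewise_continuous :: "(real \<Rightarrow> 'a::topological_space) \<Rightarrow> bool" where
  "piecewise_continuous f \<longleftrightarrow>
     (\<forall>a b. \<exists>S. finite S \<and> continuous_on ({a..b} - S) f \<and>
        (\<forall>s\<in>S. (\<exists>l. (f \<longlongrightarrow> l) (at_left s)) \<and> (\<exists>r. (f \<longlongrightarrow> r) (at_right s))))"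

text \<open>Solution of x' = A(t) x on [t0,t1] (in the Caratheodory / integral sense, which is the
  appropriate notion for piecewise continuous coefficients): continuous, and
  x(t) = x(t0) + integral from t0 to t of A(s) x(s) ds for all t in [t0,t1].\<close>
definition is_solution_on ::
  "(real \<Rightarrow> real^'n^'n) \<Rightarrow> (real \<Rightarrow> real^'n) \<Rightarrow> real \<Rightarrow> real \<Rightarrow> bool" where
  "is_solution_on A x t0 t1 \<longleftrightarrow>
     continuous_on {t0..t1} x \<and>
     (\<forall>t\<in>{t0..t1}. ((\<lambda>s. A s *v x s) has_integral (x t - x t0)) {t0..t})"

end

theory Submission
  imports Defs
begin


lemma pc_local_bound:
  fixes f :: "real \<Rightarrow> 'a::real_normed_vector"
  assumes fin: "finite S" and c: "continuous_on ({a..b} - S) f"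
    and lim: "\<forall>s\<in>S. (\<exists>l. (f \<longlongrightarrow> l) (at_left s)) \<and> (\<exists>r. (f \<longlongrightarrow> r) (at_right s))"
    and x: "x \<in> {a..b}"
  shows "\<exists>e>0. \<exists>B. \<forall>y\<in>{a..b}. dist y x < e \<longrightarrow> norm (f y) \<le> B"
proof (cases "x \<in> S")
  case False
  then have xS: "x \<in> {a..b} - S" using x by auto
  obtain d where d: "d > 0" "\<forall>x'\<in>{a..b} - S. dist x' x < d \<longrightarrow> dist (f x') (f x) < 1"
    using c xS unfolding continuous_on_iff by (meson zero_less_one)
  obtain \<delta> where \<delta>: "\<delta> > 0" "\<forall>y\<in>S. y \<noteq> x \<longrightarrow> \<delta> \<le> dist x y"
    using finite_set_avoid[OF fin] by blast
  show ?thesis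
  proof (rule exI[of _ "min d \<delta>"], rule conjI, rule_tac[2] exI[of _ "norm (f x) + 1"], rule_tac[2] ballI, rule_tac[2] impI)
    show "min d \<delta> > 0" using d \<delta> by simp
    fix y assume y: "y \<in> {a..b}" "dist y x < min d \<delta>"
    have "y \<notin> S"
    proof
      assume "y \<in> S"
      then have "y \<noteq> x" using False by auto
      then have "\<delta> \<le> dist x y" using \<delta> \<open>y \<in> S\<close> by auto
      then show False using y by (simp add: dist_commute)
    qed
    then have "dist (f y) (f x) < 1" using d y by auto
    then show "norm (f y) \<le> norm (f x) + 1"
      by (metis add_le_cancel_left dist_commute dist_norm less_eq_real_def norm_triangle_sub order_trans)
  qed
next
  case True
  then obtain l r where l: "(f \<longlongrightarrow> l) (at_left x)" and r: "(f \<longlongrightarrow> r) (at_right x)"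
    using lim by blast
  have "eventually (\<lambda>y. dist (f y) l < 1) (at_left x)"
    using l tendsto_iff zero_less_one by blast
  then obtain b1 where b1: "b1 < x" "\<forall>y>b1. y < x \<longrightarrow> dist (f y) l < 1"
    unfolding eventually_at_left_field by blast
  have "eventually (\<lambda>y. dist (f y) r < 1) (at_right x)"
    using r tendsto_iff zero_less_one by blast
  then obtain b2 where b2: "b2 > x" "\<forall>y>x. y < b2 \<longrightarrow> dist (f y) r < 1"
    unfolding eventually_at_right_field by blast
  show ?thesis
  proof (rule exI[of _ "min (x - b1) (b2 - x)"], rule conjI, rule_tac[2] exI[of _ "max (norm (f x)) (max (norm l + 1) (norm r + 1))"], rule_tac[2] ballI, rule_tac[2] impI)
    show "min (x - b1) (b2 - x) > 0" using b1 b2 by simp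
    fix y assume y: "y \<in> {a..b}" "dist y x < min (x - b1) (b2 - x)"
    consider "y < x" | "y = x" | "y > x" by linarith
    then show "norm (f y) \<le> max (norm (f x)) (max (norm l + 1) (norm r + 1))"
    proof cases
      case 1
      then have "y > b1" using y by (simp add: dist_real_def)
      then have "dist (f y) l < 1" using b1 1 by auto
      then have "norm (f y) \<le> norm l + 1"
        by (metis add_le_cancel_left dist_commute dist_norm less_eq_real_def norm_triangle_sub order_trans)
      then show ?thesis by linarith
    next
      case 2 then show ?thesis by simp
    next
      case 3
      then have "y < b2" using y by (simp add: dist_real_def)
      then have "dist (f y) r < 1" using b2 3 by auto
      then have "norm (f y) \<le> norm r + 1"
        by (metis add_le_cancel_left dist_commute dist_norm less_eq_real_def norm_triangle_sub order_trans)
      then show ?thesis by linarith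
    qed
  qed
qed

lemma pc_bounded:
  fixes f :: "real \<Rightarrow> 'a::real_normed_vector"
  assumes "piecewise_continuous f"
  shows "\<exists>B. \<forall>x\<in>{a..b}. norm (f x) \<le> B"
proof -
  obtain S where fin: "finite S" and c: "continuous_on ({a..b} - S) f"
    and lim: "\<forall>s\<in>S. (\<exists>l. (f \<longlongrightarrow> l) (at_left s)) \<and> (\<exists>r. (f \<longlongrightarrow> r) (at_right s))"
    using assms unfolding piecewise_continuous_def by blast
  have "\<forall>x\<in>{a..b}. \<exists>e>0. \<exists>B. \<forall>y\<in>{a..b}. dist y x < e \<longrightarrow> norm (f y) \<le> B"
    using pc_local_bound[OF fin c lim] by blast
  then obtain e Bf where eB: "\<And>x. x \<in> {a..b} \<Longrightarrow> e x > 0 \<and> (\<forall>y\<in>{a..b}. dist y x < e x \<longrightarrow> norm (f y) \<le> Bf x)"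
    by metis
  have "{a..b} \<subseteq> (\<Union>x\<in>{a..b}. ball x (e x))"
    using eB by force
  then obtain D where D: "D \<subseteq> {a..b}" "finite D" "{a..b} \<subseteq> (\<Union>x\<in>D. ball x (e x))"
    using compactE_image[OF compact_Icc[of a b], of "{a..b}" "\<lambda>x. ball x (e x)"] by blast
  show ?thesis
  proof (intro exI[of _ "\<Sum>x\<in>D. \<bar>Bf x\<bar>"] ballI)
    fix y assume y: "y \<in> {a..b}"
    then obtain x where x: "x \<in> D" "y \<in> ball x (e x)" using D by blast
    then have "norm (f y) \<le> Bf x" using eB[of x] D y by (auto simp: dist_commute)
    also have "\<dots> \<le> \<bar>Bf x\<bar>" by simp
    also have "\<dots> \<le> (\<Sum>x\<in>D. \<bar>Bf x\<bar>)"
      by (rule member_le_sum) (use x D in auto)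
    finally show "norm (f y) \<le> (\<Sum>x\<in>D. \<bar>Bf x\<bar>)" .
  qed
qed



lemma vec_nth_cont: "continuous_on s f \<Longrightarrow> continuous_on s (\<lambda>x. f x $ k)"
  by (intro continuous_intros)

lemma mv_comp: "(M *v v) $ k = (\<Sum>l\<in>UNIV. M $ k $ l * v $ l)"
  by (simp add: matrix_vector_mult_def)

definition pcb :: "real set \<Rightarrow> real \<Rightarrow> real \<Rightarrow> (real \<Rightarrow> real) \<Rightarrow> bool" where
  "pcb S a b g \<longleftrightarrow> continuous_on ({a..b} - S) g \<and> (\<exists>B. \<forall>x\<in>{a..b}. \<bar>g x\<bar> \<le> B)"

lemma pcb_cont: "continuous_on {a..b} g \<Longrightarrow> pcb S a b g"
proof -
  assume c: "continuous_on {a..b} g"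
  then have "compact (g ` {a..b})" by (rule compact_continuous_image[OF _ compact_Icc])
  then obtain B where "\<forall>y\<in>g ` {a..b}. norm y \<le> B" using compact_imp_bounded bounded_iff by metis
  then show ?thesis using c unfolding pcb_def by (auto intro: continuous_on_subset)
qed

lemma pcb_const: "pcb S a b (\<lambda>x. c)"
  by (rule pcb_cont) simp

lemma pcb_add: "pcb S a b f \<Longrightarrow> pcb S a b g \<Longrightarrow> pcb S a b (\<lambda>x. f x + g x)"
  unfolding pcb_def
proof (elim conjE exE, intro conjI)
  fix B1 B2 assume "\<forall>x\<in>{a..b}. \<bar>f x\<bar> \<le> B1" "\<forall>x\<in>{a..b}. \<bar>g x\<bar> \<le> B2"
  then show "\<exists>B. \<forall>x\<in>{a..b}. \<bar>f x + g x\<bar> \<le> B"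
    by (intro exI[of _ "B1 + B2"]) (auto intro: order_trans[OF abs_triangle_ineq] add_mono)
qed (auto intro: continuous_intros)

lemma pcb_mult: "pcb S a b f \<Longrightarrow> pcb S a b g \<Longrightarrow> pcb S a b (\<lambda>x. f x * g x)"
  unfolding pcb_def
proof (elim conjE exE, intro conjI)
  fix B1 B2 assume 1: "\<forall>x\<in>{a..b}. \<bar>f x\<bar> \<le> B1" and 2: "\<forall>x\<in>{a..b}. \<bar>g x\<bar> \<le> B2"
  show "\<exists>B. \<forall>x\<in>{a..b}. \<bar>f x * g x\<bar> \<le> B"
  proof (intro exI[of _ "B1 * B2"] ballI)
    fix x assume x: "x \<in> {a..b}"
    have "\<bar>f x * g x\<bar> = \<bar>f x\<bar> * \<bar>g x\<bar>" by (simp add: abs_mult)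
    also have "\<dots> \<le> B1 * B2" using 1 2 x by (intro mult_mono) auto
    finally show "\<bar>f x * g x\<bar> \<le> B1 * B2" .
  qed
qed (auto intro: continuous_intros)

lemma pcb_neg: "pcb S a b f \<Longrightarrow> pcb S a b (\<lambda>x. - f x)"
  unfolding pcb_def by (auto intro: continuous_intros)

lemma pcb_diff: "pcb S a b f \<Longrightarrow> pcb S a b g \<Longrightarrow> pcb S a b (\<lambda>x. f x - g x)"
  using pcb_add[of S a b f "\<lambda>x. - g x"] pcb_neg by simp

lemma pcb_sum: "finite I \<Longrightarrow> (\<And>i. i \<in> I \<Longrightarrow> pcb S a b (f i)) \<Longrightarrow> pcb S a b (\<lambda>x. \<Sum>i\<in>I. f i x)"
  by (induction I rule: finite_induct) (auto intro: pcb_add pcb_const)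

lemma pcb_integrable:
  assumes fin: "finite S" and p: "pcb S a b g" and st: "a \<le> s" "s \<le> t" "t \<le> b"
  shows "g integrable_on {s..t}"
proof -
  obtain B where c: "continuous_on ({s..t} - S) g" and bd: "\<And>x. x \<in> {s..t} \<Longrightarrow> \<bar>g x\<bar> \<le> B"
  proof -
    obtain B where "continuous_on ({a..b} - S) g" "\<forall>x\<in>{a..b}. \<bar>g x\<bar> \<le> B"
      using p unfolding pcb_def by blast
    moreover have "{s..t} - S \<subseteq> {a..b} - S" using st by auto
    ultimately show ?thesis using that[of B] st by (meson atLeastAtMost_iff continuous_on_subset order_trans)
  qed
  have L: "{s..t} - S \<in> sets lebesgue" by (simp add: fin finite_imp_closed closed_Diff sets.Diff)
  have m: "g \<in> borel_measurable (lebesgue_on ({s..t} - S))"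
    by (rule continuous_imp_measurable_on_sets_lebesgue[OF c L])
  have "(\<lambda>x. B) integrable_on ({s..t} - S)"
    by (rule integrable_on_const) (intro fmeasurable_Diff, simp, simp add: fin finite_imp_closed)
  then have "g integrable_on ({s..t} - S)"
    using measurable_bounded_by_integrable_imp_integrable_real[OF m _ _ L] bd by auto
  then show ?thesis
    by (rule integrable_spike_set) (auto intro: negligible_subset[OF negligible_finite[OF fin]])
qed

lemma pcb_deriv:
  assumes fin: "finite S" and p: "pcb S a b g" and st: "a \<le> s" "t \<le> b"
    and x: "x \<in> {s<..<t} - S"
  shows "((\<lambda>u. integral {s..u} g) has_real_derivative g x) (at x)"
proof -
  have "continuous_on ({a<..<b} - S) g" using p unfolding pcb_def by (auto intro: continuous_on_subset)
  moreover have "open ({a<..<b} - S)" by (simp add: fin finite_imp_closed open_Diff)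
  moreover have "x \<in> {a<..<b} - S" using x st by auto
  ultimately have ic: "isCont g x" using continuous_on_eq_continuous_at by blast
  have int: "g integrable_on {s..t}" using pcb_integrable[OF fin p, of s t] st x by auto
  have "((\<lambda>u. integral {s..u} g) has_vector_derivative g x) (at x within {s..t} - {})"
    by (rule integral_has_vector_derivative_continuous_at[OF int])
       (use x ic in \<open>auto intro: continuous_at_imp_continuous_at_within\<close>)
  then show ?thesis using x
    by (simp add: has_real_derivative_iff_has_vector_derivative at_within_Icc_at)
qed

lemma mono_fin:
  fixes f :: "real \<Rightarrow> real"
  assumes fin: "finite S" and ab: "a \<le> b" and c: "continuous_on {a..b} f"
    and d: "\<And>x. x \<in> {a<..<b} - S \<Longrightarrow> (f has_real_derivative f' x) (at x) \<and> 0 \<le> f' x"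
  shows "f a \<le> f b"
proof -
  define g where "g x = (if x \<in> {a<..<b} - S then f' x else 0)" for x
  have "(g has_integral (f b - f a)) {a..b}"
  proof (rule fundamental_theorem_of_calculus_interior_strong[OF fin ab _ c])
    fix x assume "x \<in> {a<..<b} - S"
    then show "(f has_vector_derivative g x) (at x)"
      using d[of x] by (simp add: g_def has_real_derivative_iff_has_vector_derivative)
  qed
  moreover have "\<And>x. 0 \<le> g x" using d by (simp add: g_def)
  ultimately have "0 \<le> f b - f a" by (rule has_integral_nonneg)
  then show ?thesis by simp
qed



lemma gronwall0:
  fixes N :: "real \<Rightarrow> real"
  assumes ab: "a \<le> b" and Nc: "continuous_on {a..b} N" and L: "0 \<le> L"
    and Nle: "\<And>t. t \<in> {a..b} \<Longrightarrow> N t \<le> L * integral {a..t} N"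
    and t: "t \<in> {a..b}"
  shows "N t \<le> 0"
proof -
  define F where "F u = integral {a..u} N" for u
  define H where "H u = - (exp (- L * u) * F u)" for u
  have Fc: "continuous_on {a..b} F"
    unfolding F_def by (rule indefinite_integral_continuous_1[OF integrable_continuous_interval[OF Nc]])
  have Fd: "(F has_real_derivative N x) (at x)" if "x \<in> {a<..<b}" for x
  proof -
    have "(F has_vector_derivative N x) (at x within {a..b})"
      unfolding F_def by (rule integral_has_vector_derivative[OF Nc]) (use that in auto)
    then show ?thesis using that by (simp add: has_real_derivative_iff_has_vector_derivative at_within_Icc_at)
  qed
  have "H a \<le> H t"
  proof (rule mono_fin[of "{}" a t H "\<lambda>x. exp (- L * x) * (L * F x - N x)"])
    show "a \<le> t" using t by auto
    show "continuous_on {a..t} H" unfolding H_def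
      by (intro continuous_intros continuous_on_subset[OF Fc]) (use t in auto)
  next
    fix x assume x: "x \<in> {a<..<t} - {}"
    then have xab: "x \<in> {a<..<b}" using t by auto
    have "(H has_real_derivative - (- L * exp (- L * x) * F x + exp (- L * x) * N x)) (at x)"
      unfolding H_def
      by (auto intro!: derivative_eq_intros Fd[OF xab])
    moreover have "- (- L * exp (- L * x) * F x + exp (- L * x) * N x) = exp (- L * x) * (L * F x - N x)"
      by (simp add: algebra_simps)
    moreover have "0 \<le> L * F x - N x" using Nle[of x] xab by (simp add: F_def)
    ultimately show "(H has_real_derivative exp (- L * x) * (L * F x - N x)) (at x) \<and> 0 \<le> exp (- L * x) * (L * F x - N x)"
      by simp
  qed simp
  moreover have "H a = 0" by (simp add: H_def F_def)
  ultimately have "0 \<le> - (exp (- L * t) * F t)" by (simp add: H_def)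
  then have "F t \<le> 0" by (simp add: mult_le_0_iff)
  then have "L * F t \<le> 0" using L by (simp add: mult_nonneg_nonpos)
  then show ?thesis using Nle[OF t] by (simp add: F_def)
qed



locale lin_sys =
  fixes A :: "real \<Rightarrow> real^'n^'n" and t0 t1 K :: real and S :: "real set"
  assumes t01: "t0 \<le> t1" and finS: "finite S" and contA: "continuous_on ({t0..t1} - S) A"
    and bndA: "\<And>x k l. x \<in> {t0..t1} \<Longrightarrow> \<bar>A x $ k $ l\<bar> \<le> K"
    and offd: "\<And>x k l. k \<noteq> l \<Longrightarrow> 0 \<le> A x $ k $ l"
    and rows: "\<And>x k. (\<Sum>l\<in>UNIV. A x $ k $ l) = 0"
begin

lemma K_nonneg: "0 \<le> K"
  using bndA[of t0 undefined undefined] t01 by auto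

lemma entry_pcb: "pcb S t0 t1 (\<lambda>x. A x $ k $ l)"
  unfolding pcb_def using bndA by (auto intro!: vec_nth_cont contA exI[of _ K])

lemma mv_pcb: "continuous_on {t0..t1} v \<Longrightarrow> pcb S t0 t1 (\<lambda>x. (A x *v v x) $ k)"
  unfolding mv_comp
  by (intro pcb_sum pcb_mult entry_pcb pcb_cont vec_nth_cont) auto

lemma mv_int: "continuous_on {t0..t1} v \<Longrightarrow> t0 \<le> s \<Longrightarrow> s \<le> t \<Longrightarrow> t \<le> t1 \<Longrightarrow>
    (\<lambda>x. (A x *v v x) $ k) integrable_on {s..t}"
  by (rule pcb_integrable[OF finS mv_pcb]) auto

lemma diag_nonpos: "A x $ k $ k \<le> 0"
proof -
  have "0 = (\<Sum>l\<in>UNIV. A x $ k $ l)" using rows by simp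
  also have "\<dots> = A x $ k $ k + (\<Sum>l\<in>UNIV - {k}. A x $ k $ l)"
    by (simp add: sum.remove)
  finally show ?thesis using sum_nonneg[of "UNIV - {k}" "\<lambda>l. A x $ k $ l"] offd by force
qed

lemma pointwise_lb:
  assumes x: "x \<in> {t0..t1}" and yk: "y $ k \<le> 0"
  shows "- (K * (\<Sum>l\<in>UNIV. max 0 (- y $ l))) \<le> (A x *v y) $ k"
proof -
  have "- (K * (\<Sum>l\<in>UNIV. max 0 (- y $ l))) = (\<Sum>l\<in>UNIV. - (K * max 0 (- y $ l)))"
    by (simp add: sum_distrib_left sum_negf)
  also have "\<dots> \<le> (\<Sum>l\<in>UNIV. A x $ k $ l * y $ l)"
  proof (rule sum_mono)
    fix l :: 'n
    show "- (K * max 0 (- y $ l)) \<le> A x $ k $ l * y $ l"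
    proof (cases "l = k")
      case True
      have "0 \<le> A x $ k $ l * y $ l" using True diag_nonpos[of x k] yk by (simp add: mult_nonpos_nonpos)
      moreover have "0 \<le> K * max 0 (- y $ l)" using K_nonneg by simp
      ultimately show ?thesis by linarith
    next
      case False
      then have a0: "0 \<le> A x $ k $ l" using offd by auto
      have aK: "A x $ k $ l \<le> K" using bndA[OF x, of k l] by simp
      have "A x $ k $ l * (- max 0 (- y $ l)) \<le> A x $ k $ l * y $ l"
        by (rule mult_left_mono[OF _ a0]) simp
      moreover have "A x $ k $ l * max 0 (- y $ l) \<le> K * max 0 (- y $ l)"
        by (rule mult_right_mono[OF aK]) simp
      ultimately show ?thesis by simp
    qed
  qed
  also have "\<dots> = (A x *v y) $ k" by (simp add: mv_comp)
  finally show ?thesis .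
qed

lemma positivity:
  assumes yc: "continuous_on {t0..t1} y"
    and yint: "\<And>s t k. t0 \<le> s \<Longrightarrow> s \<le> t \<Longrightarrow> t \<le> t1 \<Longrightarrow>
        integral {s..t} (\<lambda>x. (A x *v y x) $ k) \<le> y t $ k - y s $ k"
    and y0: "\<And>k. 0 \<le> y t0 $ k"
    and t: "t \<in> {t0..t1}"
  shows "0 \<le> y t $ k"
proof -
  define N where "N x = (\<Sum>l\<in>UNIV. max 0 (- y x $ l))" for x
  have Nc: "continuous_on {t0..t1} N" unfolding N_def
    by (intro continuous_intros vec_nth_cont yc)
  have N0: "0 \<le> N x" for x unfolding N_def by (intro sum_nonneg) auto
  have Nint: "N integrable_on {s..t}" if "t0 \<le> s" "t \<le> t1" for s t
    by (rule integrable_continuous_interval, rule continuous_on_subset[OF Nc]) (use that in auto)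
  have comp: "max 0 (- y t $ k) \<le> K * integral {t0..t} N" if t: "t \<in> {t0..t1}" for t k
  proof (cases "0 \<le> y t $ k")
    case True
    have "0 \<le> integral {t0..t} N" by (rule integral_nonneg[OF Nint]) (use t N0 in auto)
    then show ?thesis using True K_nonneg by simp
  next
    case False
    define T where "T = {t0..t} \<inter> (\<lambda>x. y x $ k) -` {0..}"
    have cT: "closed T" unfolding T_def
      by (rule continuous_closed_preimage) (use t in \<open>auto intro!: vec_nth_cont continuous_on_subset[OF yc]\<close>)
    have t0T: "t0 \<in> T" using y0 t by (auto simp: T_def)
    have bT: "bdd_above T" unfolding T_def by (auto intro: bdd_aboveI[of _ t])
    define s where "s = Sup T"
    have sT: "s \<in> T" unfolding s_def using closed_contains_Sup[OF _ bT cT] t0T by auto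
    have up: "x \<le> s" if "x \<in> T" for x unfolding s_def by (rule cSup_upper[OF that bT])
    have s1: "t0 \<le> s" "s \<le> t" "0 \<le> y s $ k" using sT by (auto simp: T_def)
    have "continuous_on {s..t} (\<lambda>x. y x $ k)"
      by (rule vec_nth_cont, rule continuous_on_subset[OF yc]) (use s1 t in auto)
    then obtain x where x: "s \<le> x" "x \<le> t" "y x $ k = 0"
      using IVT2'[of "\<lambda>x. y x $ k" t 0 s] s1 False t by auto
    have "x \<in> T" using x s1 by (auto simp: T_def)
    then have "x = s" using up x by force
    then have ys0: "y s $ k = 0" using x by simp
    have neg: "y x $ k \<le> 0" if "x \<in> {s..t}" for x
    proof (rule ccontr)
      assume "\<not> y x $ k \<le> 0"
      then have "x \<in> T" using that s1 by (auto simp: T_def)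
      then have "x = s" using up that by force
      then show False using ys0 \<open>\<not> y x $ k \<le> 0\<close> by simp
    qed
    have "integral {s..t} (\<lambda>x. - (K * N x)) \<le> integral {s..t} (\<lambda>x. (A x *v y x) $ k)"
    proof (rule integral_le)
      show "(\<lambda>x. - (K * N x)) integrable_on {s..t}"
        using integrable_neg[OF integrable_on_cmult_left[OF Nint[of s t], of K]] s1 t by simp
      show "(\<lambda>x. (A x *v y x) $ k) integrable_on {s..t}" by (rule mv_int[OF yc]) (use s1 t in auto)
      fix x assume "x \<in> {s..t}"
      then show "- (K * N x) \<le> (A x *v y x) $ k"
        unfolding N_def using pointwise_lb[of x "y x" k] neg s1 t by auto
    qed
    also have "\<dots> \<le> y t $ k - y s $ k" using yint[of s t k] s1 t by auto
    finally have 1: "- (K * integral {s..t} N) \<le> y t $ k" using ys0 by simp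
    have "integral {t0..s} N + integral {s..t} N = integral {t0..t} N"
      by (rule Henstock_Kurzweil_Integration.integral_combine) (use s1 Nint[of t0 t] t in auto)
    moreover have "0 \<le> integral {t0..s} N" by (rule integral_nonneg[OF Nint]) (use s1 t N0 in auto)
    ultimately have "K * integral {s..t} N \<le> K * integral {t0..t} N"
      using K_nonneg by (intro mult_left_mono) auto
    then show ?thesis using 1 False by simp
  qed
  have Nle: "N t \<le> (CARD('n) * K) * integral {t0..t} N" if t: "t \<in> {t0..t1}" for t
  proof -
    have "N t \<le> (\<Sum>l\<in>(UNIV::'n set). K * integral {t0..t} N)"
      using comp[OF t] unfolding N_def[of t] by (intro sum_mono) auto
    then show ?thesis by simp
  qed
  have "N t \<le> 0"
    by (rule gronwall0[OF t01 Nc _ Nle t]) (simp add: K_nonneg)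
  moreover have "max 0 (- y t $ k) \<le> N t"
    unfolding N_def by (rule member_le_sum) auto
  ultimately show ?thesis by simp
qed


lemma subsol:
  assumes zc: "continuous_on {t0..t1} z"
    and zd: "\<And>x. x \<in> {t0<..<t1} - S \<Longrightarrow>
        ((\<lambda>t. z t $ k) has_real_derivative d x) (at x) \<and> d x \<le> (A x *v z x) $ k"
    and st: "t0 \<le> s" "s \<le> t" "t \<le> t1"
  shows "z t $ k - z s $ k \<le> integral {s..t} (\<lambda>x. (A x *v z x) $ k)"
proof -
  define F where "F = (\<lambda>x. (A x *v z x) $ k)"
  define g where "g u = integral {s..u} F - z u $ k" for u
  have Fi: "F integrable_on {s..t}" unfolding F_def by (rule mv_int[OF zc]) (use st in auto)
  have "g s \<le> g t"
  proof (rule mono_fin[OF finS st(2), of g "\<lambda>x. F x - d x"])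
    show "continuous_on {s..t} g" unfolding g_def
      by (intro continuous_intros indefinite_integral_continuous_1[OF Fi] vec_nth_cont
          continuous_on_subset[OF zc]) (use st in auto)
    fix x assume x: "x \<in> {s<..<t} - S"
    have "((\<lambda>u. integral {s..u} F) has_real_derivative F x) (at x)"
      unfolding F_def by (rule pcb_deriv[OF finS mv_pcb[OF zc] st(1) st(3) x])
    moreover have "x \<in> {t0<..<t1} - S" using x st by auto
    ultimately show "(g has_real_derivative F x - d x) (at x) \<and> 0 \<le> F x - d x"
      unfolding g_def using zd[of x] by (auto intro: DERIV_diff simp: F_def)
  qed
  then show ?thesis by (simp add: g_def F_def)
qed

lemma sol_int:
  assumes sol: "is_solution_on A \<zeta> t0 t1" and st: "t0 \<le> s" "s \<le> t" "t \<le> t1"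
  shows "integral {s..t} (\<lambda>x. (A x *v \<zeta> x) $ k) = \<zeta> t $ k - \<zeta> s $ k"
proof -
  have zc: "continuous_on {t0..t1} \<zeta>" using sol by (simp add: is_solution_on_def)
  have I: "integral {t0..u} (\<lambda>x. (A x *v \<zeta> x) $ k) = \<zeta> u $ k - \<zeta> t0 $ k" if "u \<in> {t0..t1}" for u
  proof -
    have h: "((\<lambda>s. A s *v \<zeta> s) has_integral (\<zeta> u - \<zeta> t0)) {t0..u}"
      using sol that by (simp add: is_solution_on_def)
    have "integral {t0..u} (\<lambda>x. (A x *v \<zeta> x) $ k) = integral {t0..u} (\<lambda>s. A s *v \<zeta> s) $ k"
      by (rule integral_component_eq_cart) (use h in blast)
    also have "\<dots> = \<zeta> u $ k - \<zeta> t0 $ k" using h by (simp add: integral_unique)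
    finally show ?thesis .
  qed
  have "integral {t0..s} (\<lambda>x. (A x *v \<zeta> x) $ k) + integral {s..t} (\<lambda>x. (A x *v \<zeta> x) $ k)
      = integral {t0..t} (\<lambda>x. (A x *v \<zeta> x) $ k)"
    by (rule Henstock_Kurzweil_Integration.integral_combine) (use st mv_int[OF zc, of t0 t k] in auto)
  then show ?thesis using I[of s] I[of t] st by auto
qed

lemma comparison:
  assumes sol: "is_solution_on A \<zeta> t0 t1"
    and zc: "continuous_on {t0..t1} z"
    and zd: "\<And>x k. x \<in> {t0<..<t1} - S \<Longrightarrow>
        ((\<lambda>t. z t $ k) has_real_derivative d k x) (at x) \<and> d k x \<le> (A x *v z x) $ k"
    and z0: "\<And>k. z t0 $ k \<le> \<zeta> t0 $ k"
    and t: "t \<in> {t0..t1}"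
  shows "z t $ k \<le> \<zeta> t $ k"
proof -
  have \<zeta>c: "continuous_on {t0..t1} \<zeta>" using sol by (simp add: is_solution_on_def)
  define y where "y x = \<zeta> x - z x" for x
  have yc: "continuous_on {t0..t1} y" unfolding y_def by (intro continuous_intros \<zeta>c zc)
  have "0 \<le> y t $ k"
  proof (rule positivity[OF yc _ _ t])
    fix s u k assume st: "t0 \<le> s" "s \<le> u" "u \<le> t1"
    have "integral {s..u} (\<lambda>x. (A x *v y x) $ k)
        = integral {s..u} (\<lambda>x. (A x *v \<zeta> x) $ k) - integral {s..u} (\<lambda>x. (A x *v z x) $ k)"
      unfolding y_def matrix_vector_mult_diff_distrib vector_minus_component
      by (rule integral_diff) (use st in \<open>auto intro: mv_int \<zeta>c zc\<close>)
    also have "\<dots> \<le> (\<zeta> u $ k - \<zeta> s $ k) - (z u $ k - z s $ k)"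
      using sol_int[OF sol st, of k] subsol[OF zc zd st, of k] by simp
    finally show "integral {s..u} (\<lambda>x. (A x *v y x) $ k) \<le> y u $ k - y s $ k"
      by (simp add: y_def)
  next
    fix k show "0 \<le> y t0 $ k" using z0[of k] by (simp add: y_def)
  qed
  then show ?thesis by (simp add: y_def)
qed

end


context lin_sys begin

lemma mv_rel: "(A x *v v) $ i = (\<Sum>l\<in>UNIV. A x $ i $ l * (v $ l - v $ i))"
proof -
  have "(\<Sum>l\<in>UNIV. A x $ i $ l * (v $ l - v $ i))
      = (\<Sum>l\<in>UNIV. A x $ i $ l * v $ l) - (\<Sum>l\<in>UNIV. A x $ i $ l) * v $ i"
    by (simp add: right_diff_distrib sum_subtractf sum_distrib_right)
  then show ?thesis using rows[of x i] by (simp add: mv_comp)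
qed

lemma ent_sum_pcb: "pcb S t0 t1 (\<lambda>x. \<Sum>l\<in>L. A x $ k $ l)"
  by (intro pcb_sum entry_pcb) auto

lemma prim:
  assumes h: "pcb S t0 t1 h" and h0: "\<And>x. 0 \<le> h x"
  shows "continuous_on {t0..t1} (\<lambda>t. integral {t0..t} h)"
    and "\<And>x. x \<in> {t0<..<t1} - S \<Longrightarrow> ((\<lambda>t. integral {t0..t} h) has_real_derivative h x) (at x)"
    and "\<And>t. t \<in> {t0..t1} \<Longrightarrow> 0 \<le> integral {t0..t} h"
    and "\<And>t. t \<in> {t0..t1} \<Longrightarrow> integral {t0..t} h \<le> integral {t0..t1} h"
    and "integral {t0..t0} h = 0"
proof -
  have hi: "\<And>s t. t0 \<le> s \<Longrightarrow> s \<le> t \<Longrightarrow> t \<le> t1 \<Longrightarrow> h integrable_on {s..t}"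
    by (rule pcb_integrable[OF finS h]) auto
  show "continuous_on {t0..t1} (\<lambda>t. integral {t0..t} h)"
    by (rule indefinite_integral_continuous_1[OF hi]) (use t01 in auto)
  show "\<And>x. x \<in> {t0<..<t1} - S \<Longrightarrow> ((\<lambda>t. integral {t0..t} h) has_real_derivative h x) (at x)"
    by (rule pcb_deriv[OF finS h]) auto
  show nn: "\<And>t. t \<in> {t0..t1} \<Longrightarrow> 0 \<le> integral {t0..t} h"
    by (rule integral_nonneg[OF hi]) (auto simp: h0)
  show "\<And>t. t \<in> {t0..t1} \<Longrightarrow> integral {t0..t} h \<le> integral {t0..t1} h"
  proof -
    fix t assume t: "t \<in> {t0..t1}"
    have "integral {t0..t} h + integral {t..t1} h = integral {t0..t1} h"
      by (rule Henstock_Kurzweil_Integration.integral_combine) (use t hi[of t0 t1] t01 in auto)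
    moreover have "0 \<le> integral {t..t1} h" by (rule integral_nonneg[OF hi]) (use t in \<open>auto simp: h0\<close>)
    ultimately show "integral {t0..t} h \<le> integral {t0..t1} h" by linarith
  qed
  show "integral {t0..t0} h = 0" by simp
qed

lemma int_ent_sum:
  "integral {t0..t1} (\<lambda>x. \<Sum>l\<in>L. A x $ k $ l) = (\<Sum>l\<in>L. integral {t0..t1} (\<lambda>x. A x $ k $ l))"
  by (rule integral_sum) (auto intro: pcb_integrable[OF finS entry_pcb] simp: t01)

lemma int_ent_sum2:
  "integral {t0..t1} (\<lambda>x. \<Sum>k\<in>G. \<Sum>l\<in>L k. A x $ k $ l) = (\<Sum>k\<in>G. \<Sum>l\<in>L k. integral {t0..t1} (\<lambda>x. A x $ k $ l))"
proof -
  have "integral {t0..t1} (\<lambda>x. \<Sum>k\<in>G. \<Sum>l\<in>L k. A x $ k $ l) = (\<Sum>k\<in>G. integral {t0..t1} (\<lambda>x. \<Sum>l\<in>L k. A x $ k $ l))"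
    by (rule integral_sum) (auto intro: pcb_integrable[OF finS ent_sum_pcb] simp: t01)
  then show ?thesis by (simp add: int_ent_sum)
qed

lemma part1:
  fixes G H :: "'n set" and \<zeta> :: "real \<Rightarrow> real^'n"
  assumes disj: "G \<inter> H = {}" and cover: "G \<union> H = UNIV"
    and sol: "is_solution_on A \<zeta> t0 t1"
    and mu: "\<And>i. \<mu> \<le> \<zeta> t0 $ i" and g: "\<mu> \<le> g" and gG: "\<And>i. i \<in> G \<Longrightarrow> g \<le> \<zeta> t0 $ i"
    and k: "k \<in> G"
  shows "\<mu> + (g - \<mu>) * exp (- integral {t0..t1} (\<lambda>x. \<Sum>k\<in>G. \<Sum>l\<in>H. A x $ k $ l)) \<le> \<zeta> t1 $ k"
proof -
  define c where "c = (\<lambda>x. \<Sum>k\<in>G. \<Sum>l\<in>H. A x $ k $ l)"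
  have cp: "pcb S t0 t1 c" unfolding c_def by (intro pcb_sum ent_sum_pcb) auto
  have ent0: "0 \<le> A x $ k $ l" if "k \<in> G" "l \<in> H" for x k l
  proof -
    have "k \<noteq> l" using disj that by auto
    then show ?thesis by (rule offd)
  qed
  have c0: "0 \<le> c x" for x unfolding c_def by (intro sum_nonneg ent0)
  have rowle: "(\<Sum>l\<in>H. A x $ i $ l) \<le> c x" if "i \<in> G" for x i
    unfolding c_def by (rule member_le_sum[OF that]) (auto intro: sum_nonneg ent0)
  define C where "C = (\<lambda>t. integral {t0..t} c)"
  note P = prim[OF cp c0, folded C_def]
  define \<gamma> where "\<gamma> = g - \<mu>"
  have \<gamma>0: "0 \<le> \<gamma>" using g by (simp add: \<gamma>_def)
  define z where "z = (\<lambda>t. \<chi> i. if i \<in> G then \<mu> + \<gamma> * exp (- C t) else \<mu>)"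
  define d where "d = (\<lambda>i x. if i \<in> G then - (\<gamma> * c x * exp (- C x)) else 0)"
  have zi: "z t $ i = (if i \<in> G then \<mu> + \<gamma> * exp (- C t) else \<mu>)" for t i
    by (simp add: z_def)
  have "z t1 $ k \<le> \<zeta> t1 $ k"
  proof (rule comparison[OF sol, of z d])
    show "continuous_on {t0..t1} z" unfolding z_def
    proof (intro continuous_on_vec_lambda)
      fix i show "continuous_on {t0..t1} (\<lambda>x. if i \<in> G then \<mu> + \<gamma> * exp (- C x) else \<mu>)"
        by (cases "i \<in> G") (auto intro!: continuous_intros P(1))
    qed
  next
    fix x i assume x: "x \<in> {t0<..<t1} - S"
    have der: "((\<lambda>t. z t $ i) has_real_derivative d i x) (at x)"
    proof (cases "i \<in> G")
      case True
      have "((\<lambda>t. \<mu> + \<gamma> * exp (- C t)) has_real_derivative - (\<gamma> * c x * exp (- C x))) (at x)"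
        by (auto intro!: derivative_eq_intros P(2)[OF x])
      then show ?thesis using True by (simp add: zi d_def)
    next
      case False
      then show ?thesis by (simp add: zi d_def)
    qed
    have ineq: "d i x \<le> (A x *v z x) $ i"
    proof (cases "i \<in> G")
      case True
      have "(A x *v z x) $ i = (\<Sum>l\<in>UNIV. if l \<in> H then - (\<gamma> * exp (- C x) * A x $ i $ l) else 0)"
        unfolding mv_rel
      proof (rule sum.cong[OF refl])
        fix l
        show "A x $ i $ l * (z x $ l - z x $ i) = (if l \<in> H then - (\<gamma> * exp (- C x) * A x $ i $ l) else 0)"
          using True disj cover by (auto simp: zi)
      qed
      also have "\<dots> = (\<Sum>l\<in>H. - (\<gamma> * exp (- C x) * A x $ i $ l))"
        by (simp add: sum.inter_restrict[symmetric])
      also have "\<dots> = - (\<gamma> * exp (- C x) * (\<Sum>l\<in>H. A x $ i $ l))"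
        by (simp add: sum_negf sum_distrib_left)
      finally have eq: "(A x *v z x) $ i = - (\<gamma> * exp (- C x) * (\<Sum>l\<in>H. A x $ i $ l))" .
      have "\<gamma> * exp (- C x) * (\<Sum>l\<in>H. A x $ i $ l) \<le> \<gamma> * exp (- C x) * c x"
        by (rule mult_left_mono[OF rowle[OF True]]) (simp add: \<gamma>0)
      then show ?thesis using True eq by (simp add: d_def mult_ac)
    next
      case False
      have "0 \<le> (A x *v z x) $ i"
        unfolding mv_rel
      proof (rule sum_nonneg)
        fix l
        show "0 \<le> A x $ i $ l * (z x $ l - z x $ i)"
        proof (cases "l = i")
          case False
          then have "0 \<le> A x $ i $ l" using offd by auto
          moreover have "0 \<le> z x $ l - z x $ i" using \<open>i \<notin> G\<close> \<gamma>0 by (simp add: zi)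
          ultimately show ?thesis by simp
        qed simp
      qed
      then show ?thesis using False by (simp add: d_def)
    qed
    show "((\<lambda>t. z t $ i) has_real_derivative d i x) (at x) \<and> d i x \<le> (A x *v z x) $ i"
      using der ineq by simp
  next
    fix i show "z t0 $ i \<le> \<zeta> t0 $ i"
      using mu[of i] gG[of i] by (simp add: zi \<gamma>_def C_def)
  next
    show "t1 \<in> {t0..t1}" using t01 by simp
  qed
  then show ?thesis using k by (simp add: zi C_def c_def \<gamma>_def)
qed

lemma part2:
  fixes G H :: "'n set" and \<zeta> :: "real \<Rightarrow> real^'n"
  assumes disj: "G \<inter> H = {}" and cover: "G \<union> H = UNIV"
    and sol: "is_solution_on A \<zeta> t0 t1"
    and mu: "\<And>i. \<mu> \<le> \<zeta> t0 $ i" and g: "\<mu> \<le> g" and gG: "\<And>i. i \<in> G \<Longrightarrow> g \<le> \<zeta> t0 $ i"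
    and kk: "kk \<in> H"
  shows "\<mu> + (g - \<mu>) * (exp (- integral {t0..t1} (\<lambda>x. \<Sum>k\<in>G. \<Sum>l\<in>H. A x $ k $ l))
            * exp (- integral {t0..t1} (\<lambda>x. \<Sum>l\<in>H - {kk}. A x $ kk $ l))
            * (1 - exp (- integral {t0..t1} (\<lambda>x. \<Sum>l\<in>G. A x $ kk $ l)))) \<le> \<zeta> t1 $ kk"
proof -
  define c where "c = (\<lambda>x. \<Sum>k\<in>G. \<Sum>l\<in>H. A x $ k $ l)"
  define p where "p = (\<lambda>x. \<Sum>l\<in>G. A x $ kk $ l)"
  define r where "r = (\<lambda>x. \<Sum>l\<in>H - {kk}. A x $ kk $ l)"
  have cp: "pcb S t0 t1 c" unfolding c_def by (intro pcb_sum ent_sum_pcb) auto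
  have pp: "pcb S t0 t1 p" unfolding p_def by (rule ent_sum_pcb)
  have rp: "pcb S t0 t1 r" unfolding r_def by (rule ent_sum_pcb)
  have ent0: "0 \<le> A x $ k $ l" if "k \<noteq> l" for x k l
    using that by (rule offd)
  have c0: "0 \<le> c x" for x unfolding c_def
    by (intro sum_nonneg ent0) (use disj in auto)
  have p0: "0 \<le> p x" for x unfolding p_def
    by (intro sum_nonneg ent0) (use disj kk in auto)
  have r0: "0 \<le> r x" for x unfolding r_def
    by (intro sum_nonneg ent0) auto
  have rowle: "(\<Sum>l\<in>H. A x $ i $ l) \<le> c x" if "i \<in> G" for x i
    unfolding c_def by (rule member_le_sum[OF that]) (use disj in \<open>auto intro: sum_nonneg ent0\<close>)
  define C where "C = (\<lambda>t. integral {t0..t} c)"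
  define P where "P = (\<lambda>t. integral {t0..t} p)"
  define R where "R = (\<lambda>t. integral {t0..t} r)"
  note PC = prim[OF cp c0, folded C_def]
  note PP = prim[OF pp p0, folded P_def]
  note PR = prim[OF rp r0, folded R_def]
  define \<gamma> where "\<gamma> = g - \<mu>"
  have \<gamma>0: "0 \<le> \<gamma>" using g by (simp add: \<gamma>_def)
  define E where "E = exp (- C t1)"
  have E0: "0 \<le> E" by (simp add: E_def)
  have EC: "E \<le> exp (- C x)" if "x \<in> {t0..t1}" for x
    using PC(4)[OF that] by (simp add: E_def C_def)
  define w where "w = (\<lambda>t. \<gamma> * E * exp (- R t) * (1 - exp (- P t)))"
  have w0: "0 \<le> w x" if "x \<in> {t0..t1}" for x
  proof -
    have "0 \<le> 1 - exp (- P x)" using PP(3)[OF that] by (simp add: P_def)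
    then show ?thesis unfolding w_def using \<gamma>0 E0 by simp
  qed
  define z where "z = (\<lambda>t. \<chi> i. if i \<in> G then \<mu> + \<gamma> * exp (- C t) else if i = kk then \<mu> + w t else \<mu>)"
  define d where "d = (\<lambda>i x. if i \<in> G then - (\<gamma> * c x * exp (- C x))
      else if i = kk then \<gamma> * E * (- (r x) * exp (- R x) * (1 - exp (- P x)) + exp (- R x) * (p x * exp (- P x)))
      else 0)"
  have zi: "z t $ i = (if i \<in> G then \<mu> + \<gamma> * exp (- C t) else if i = kk then \<mu> + w t else \<mu>)" for t i
    by (simp add: z_def)
  have kkG: "kk \<notin> G" using kk disj by auto
  have "z t1 $ kk \<le> \<zeta> t1 $ kk"
  proof (rule comparison[OF sol, of z d])
    show "continuous_on {t0..t1} z" unfolding z_def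
    proof (intro continuous_on_vec_lambda)
      fix i show "continuous_on {t0..t1} (\<lambda>x. if i \<in> G then \<mu> + \<gamma> * exp (- C x) else if i = kk then \<mu> + w x else \<mu>)"
        unfolding w_def by (cases "i \<in> G"; cases "i = kk") (auto intro!: continuous_intros PC(1) PP(1) PR(1))
    qed
  next
    fix x i assume x: "x \<in> {t0<..<t1} - S"
    then have xI: "x \<in> {t0..t1}" by auto
    have der: "((\<lambda>t. z t $ i) has_real_derivative d i x) (at x)"
    proof (cases "i \<in> G")
      case True
      have "((\<lambda>t. \<mu> + \<gamma> * exp (- C t)) has_real_derivative - (\<gamma> * c x * exp (- C x))) (at x)"
        by (auto intro!: derivative_eq_intros PC(2)[OF x])
      then show ?thesis using True by (simp add: zi d_def)
    next
      case False
      show ?thesis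
      proof (cases "i = kk")
        case True
        have "((\<lambda>t. \<mu> + w t) has_real_derivative
            \<gamma> * E * (- (r x) * exp (- R x) * (1 - exp (- P x)) + exp (- R x) * (p x * exp (- P x)))) (at x)"
          unfolding w_def
          by (auto intro!: derivative_eq_intros PP(2)[OF x] PR(2)[OF x] simp: algebra_simps)
        then show ?thesis using True kkG by (simp add: zi d_def)
      next
        case False
        then show ?thesis using \<open>i \<notin> G\<close> by (simp add: zi d_def)
      qed
    qed
    have ineq: "d i x \<le> (A x *v z x) $ i"
    proof (cases "i \<in> G")
      case True
      have "(\<Sum>l\<in>UNIV. if l \<in> H then - (\<gamma> * exp (- C x) * A x $ i $ l) else 0) \<le> (A x *v z x) $ i"
        unfolding mv_rel
      proof (rule sum_mono)
        fix l
        show "(if l \<in> H then - (\<gamma> * exp (- C x) * A x $ i $ l) else 0) \<le> A x $ i $ l * (z x $ l - z x $ i)"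
        proof (cases "l \<in> G")
          case True
          then show ?thesis using \<open>i \<in> G\<close> disj by (auto simp: zi)
        next
          case False
          then have lH: "l \<in> H" "l \<noteq> i" using cover \<open>i \<in> G\<close> by auto
          have a0: "0 \<le> A x $ i $ l" using lH by (intro ent0) auto
          have "A x $ i $ l * (- (\<gamma> * exp (- C x))) \<le> A x $ i $ l * (z x $ l - z x $ i)"
            by (rule mult_left_mono[OF _ a0]) (use \<open>i \<in> G\<close> False w0[OF xI] in \<open>auto simp: zi\<close>)
          then show ?thesis using lH by (simp add: mult_ac)
        qed
      qed
      moreover have "(\<Sum>l\<in>UNIV. if l \<in> H then - (\<gamma> * exp (- C x) * A x $ i $ l) else 0)
          = - (\<gamma> * exp (- C x) * (\<Sum>l\<in>H. A x $ i $ l))"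
        by (simp add: sum.inter_restrict[symmetric] sum_negf sum_distrib_left)
      moreover have "\<gamma> * exp (- C x) * (\<Sum>l\<in>H. A x $ i $ l) \<le> \<gamma> * exp (- C x) * c x"
        by (rule mult_left_mono[OF rowle[OF True]]) (simp add: \<gamma>0)
      ultimately show ?thesis using True by (simp add: d_def mult_ac)
    next
      case False
      note iG = False
      show ?thesis
      proof (cases "i = kk")
        case False
        have "0 \<le> (A x *v z x) $ i"
          unfolding mv_rel
        proof (rule sum_nonneg)
          fix l
          show "0 \<le> A x $ i $ l * (z x $ l - z x $ i)"
          proof (cases "l = i")
            case False
            then have "0 \<le> A x $ i $ l" using offd by auto
            moreover have "0 \<le> z x $ l - z x $ i" using iG \<open>i \<noteq> kk\<close> \<gamma>0 w0[OF xI] by (simp add: zi)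
            ultimately show ?thesis by simp
          qed simp
        qed
        then show ?thesis using False iG by (simp add: d_def)
      next
        case True
        define f where "f = (\<lambda>l. if l \<in> G then A x $ kk $ l * (\<gamma> * E - w x) else if l = kk then 0 else - (A x $ kk $ l * w x))"
        have "sum f UNIV \<le> (A x *v z x) $ kk"
          unfolding mv_rel
        proof (rule sum_mono)
          fix l
          show "f l \<le> A x $ kk $ l * (z x $ l - z x $ kk)"
          proof (cases "l \<in> G")
            case True
            have a0: "0 \<le> A x $ kk $ l" using True kkG by (intro ent0) auto
            have "\<gamma> * E \<le> \<gamma> * exp (- C x)" by (rule mult_left_mono[OF EC[OF xI] \<gamma>0])
            then have "A x $ kk $ l * (\<gamma> * E - w x) \<le> A x $ kk $ l * (z x $ l - z x $ kk)"
              using True kkG by (intro mult_left_mono[OF _ a0]) (auto simp: zi)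
            then show ?thesis using True by (simp add: f_def)
          next
            case False
            then show ?thesis using kkG by (auto simp: f_def zi)
          qed
        qed
        moreover have "sum f UNIV = (\<gamma> * E - w x) * p x - w x * r x"
        proof -
          have "sum f UNIV = sum f G + sum f H"
            using disj cover by (metis finite sum.union_disjoint)
          moreover have "sum f G = (\<gamma> * E - w x) * p x"
            by (simp add: f_def p_def sum_distrib_left mult_ac)
          moreover have "sum f H = f kk + sum f (H - {kk})"
            using kk by (simp add: sum.remove)
          moreover have "f kk = 0" using kkG by (simp add: f_def)
          moreover have "sum f (H - {kk}) = - (w x * r x)"
          proof -
            have "sum f (H - {kk}) = (\<Sum>l\<in>H - {kk}. - (A x $ kk $ l * w x))"
              by (rule sum.cong) (use disj in \<open>auto simp: f_def\<close>)
            then show ?thesis by (simp add: r_def sum_negf sum_distrib_left mult_ac)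
          qed
          ultimately show ?thesis by simp
        qed
        moreover have "d kk x \<le> (\<gamma> * E - w x) * p x - w x * r x"
        proof -
          have "(\<gamma> * E - w x) * p x - w x * r x - d kk x = \<gamma> * E * p x * (1 - exp (- R x))"
            using kkG by (simp add: d_def w_def algebra_simps)
          moreover have "0 \<le> \<gamma> * E * p x * (1 - exp (- R x))"
            using \<gamma>0 E0 p0[of x] PR(3)[OF xI] by (simp add: R_def)
          ultimately show ?thesis by linarith
        qed
        ultimately show ?thesis using True by simp
      qed
    qed
    show "((\<lambda>t. z t $ i) has_real_derivative d i x) (at x) \<and> d i x \<le> (A x *v z x) $ i"
      using der ineq by simp
  next
    fix i show "z t0 $ i \<le> \<zeta> t0 $ i"
      using mu[of i] gG[of i] by (auto simp: zi \<gamma>_def C_def w_def P_def)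
  next
    show "t1 \<in> {t0..t1}" using t01 by simp
  qed
  then show ?thesis using kkG by (simp add: zi w_def E_def C_def c_def P_def p_def R_def r_def \<gamma>_def mult_ac)
qed

end



lemma beta_ineq:
  fixes a h P R X :: real
  assumes h0: "0 \<le> h" and hP: "h \<le> P" and R0: "0 \<le> R" and RX: "R \<le> X"
  shows "exp (- a) * h / (1 + exp X * h + exp X * X) \<le> exp (- a) * (exp (- R) * (1 - exp (- P)))"
proof -
  have X0: "0 \<le> X" using R0 RX by simp
  have e1: "1 + h \<le> exp h" by (rule exp_ge_add_one_self)
  have "exp (- h) \<le> 1 / (1 + h)"
    using e1 h0 by (simp add: exp_minus field_simps)
  then have "h / (1 + h) \<le> 1 - exp (- h)"
    using h0 by (simp add: field_simps)
  also have "\<dots> \<le> 1 - exp (- P)" using hP by simp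
  finally have A1: "h / (1 + h) \<le> 1 - exp (- P)" .
  have A2: "exp (- X) \<le> exp (- R)" using RX by simp
  have "1 + (- X) \<le> exp (- X)" by (rule exp_ge_add_one_self)
  then have "exp X * (1 - X) \<le> exp X * exp (- X)"
    by (intro mult_left_mono) auto
  then have "exp X * (1 - X) \<le> 1" by (simp add: exp_minus)
  then have D: "exp X * (1 + h) \<le> 1 + exp X * h + exp X * X"
    by (simp add: algebra_simps)
  have Dpos: "0 < exp X * (1 + h)" using h0 by simp
  have "h / (1 + exp X * h + exp X * X) \<le> h / (exp X * (1 + h))"
    by (rule divide_left_mono[OF D h0]) (use Dpos D in auto)
  also have "\<dots> = exp (- X) * (h / (1 + h))" by (simp add: exp_minus field_simps)
  also have "\<dots> \<le> exp (- R) * (1 - exp (- P))"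
    by (rule mult_mono[OF A2 A1]) (use h0 in auto)
  finally have "h / (1 + exp X * h + exp X * X) \<le> exp (- R) * (1 - exp (- P))" .
  then have "exp (- a) * (h / (1 + exp X * h + exp X * X)) \<le> exp (- a) * (exp (- R) * (1 - exp (- P)))"
    by (intro mult_left_mono) auto
  then show ?thesis by simp
qed


theorem lemma1:
  fixes A :: "real \<Rightarrow> real^'n^'n" and \<zeta> :: "real \<Rightarrow> real^'n"
    and t0 t1 \<mu>min \<mu>max :: real and G H :: "'n set"
  assumes pc: "piecewise_continuous A"
    and MZ: "\<And>t. metzler (A t) \<and> zero_row_sums (A t)"
    and t01: "t0 \<le> t1"
    and sol: "is_solution_on A \<zeta> t0 t1"
    and G_ne: "G \<noteq> {}" and H_ne: "H \<noteq> {}" and disj: "G \<inter> H = {}" and cover: "G \<union> H = UNIV"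
    and mumin: "\<forall>k. \<mu>min \<le> \<zeta> t0 $ k"
    and mumax: "\<forall>k. \<zeta> t0 $ k \<le> \<mu>max"
  defines "aGH \<equiv> (\<Sum>k\<in>G. \<Sum>l\<in>H. integral {t0..t1} (\<lambda>t. A t $ k $ l))"
    and "aHG \<equiv> (\<Sum>k\<in>H. \<Sum>l\<in>G. integral {t0..t1} (\<lambda>t. A t $ k $ l))"
    and "aHH \<equiv> (\<Sum>k\<in>H. \<Sum>l\<in>H - {k}. integral {t0..t1} (\<lambda>t. A t $ k $ l))"
    and "gmin \<equiv> Min ((\<lambda>k. \<zeta> t0 $ k) ` G)"
    and "gmax \<equiv> Max ((\<lambda>k. \<zeta> t0 $ k) ` G)"
  shows "(\<forall>k\<in>G. \<mu>min + (gmin - \<mu>min) * exp (- aGH) \<le> \<zeta> t1 $ k \<and>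
                 \<zeta> t1 $ k \<le> \<mu>max - (\<mu>max - gmax) * exp (- aGH))
       \<and> (\<exists>k\<in>H. \<mu>min + (gmin - \<mu>min) * ((exp (- aGH) * aHG / real (card H)) / (1 + exp aHH * aHG / real (card H) + exp aHH * aHH)) \<le> \<zeta> t1 $ k \<and>
                 \<zeta> t1 $ k \<le> \<mu>max - (\<mu>max - gmax) * ((exp (- aGH) * aHG / real (card H)) / (1 + exp aHH * aHG / real (card H) + exp aHH * aHH)))"
  proof -
  obtain S where finS: "finite S" and cS: "continuous_on ({t0..t1} - S) A"
    using pc unfolding piecewise_continuous_def by blast
  obtain B where B: "\<forall>x\<in>{t0..t1}. norm (A x) \<le> B" using pc_bounded[OF pc] by blast
  have bnd: "\<bar>A x $ k $ l\<bar> \<le> B" if "x \<in> {t0..t1}" for x k l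
  proof -
    have "\<bar>A x $ k $ l\<bar> \<le> norm (A x $ k)" by (rule component_le_norm_cart)
    also have "\<dots> \<le> norm (A x)" by (rule Finite_Cartesian_Product.norm_nth_le)
    also have "\<dots> \<le> B" using B that by auto
    finally show ?thesis .
  qed
  interpret L: lin_sys A t0 t1 B S
    by unfold_locales (use t01 finS cS bnd MZ in \<open>auto simp: metzler_def zero_row_sums_def\<close>)
  have negmv: "M *v (- v) = - (M *v v)" for M :: "real^'n^'n" and v :: "real^'n"
    by (simp add: vec_eq_iff mv_comp sum_negf)
  have solneg: "is_solution_on A (\<lambda>t. - \<zeta> t) t0 t1"
    using sol unfolding is_solution_on_def
    by (auto intro: continuous_intros simp: negmv has_integral_neg_iff)
  have gmin_le: "gmin \<le> \<zeta> t0 $ i" if "i \<in> G" for i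
    unfolding gmin_def by (rule Min_le) (use that in auto)
  have gmin_ge: "\<mu>min \<le> gmin"
  proof -
    have "gmin \<in> (\<lambda>k. \<zeta> t0 $ k) ` G" unfolding gmin_def by (rule Min_in) (use G_ne in auto)
    then show ?thesis using mumin by auto
  qed
  have gmax_ge: "\<zeta> t0 $ i \<le> gmax" if "i \<in> G" for i
    unfolding gmax_def by (rule Max_ge) (use that in auto)
  have gmax_le: "gmax \<le> \<mu>max"
  proof -
    have "gmax \<in> (\<lambda>k. \<zeta> t0 $ k) ` G" unfolding gmax_def by (rule Max_in) (use G_ne in auto)
    then show ?thesis using mumax by auto
  qed
  have aGH_eq: "aGH = integral {t0..t1} (\<lambda>x. \<Sum>k\<in>G. \<Sum>l\<in>H. A x $ k $ l)"
    using L.int_ent_sum2[where G=G and L="\<lambda>_. H"] by (simp add: aGH_def)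
  define b where "b k = integral {t0..t1} (\<lambda>x. \<Sum>l\<in>G. A x $ k $ l)" for k
  define rr where "rr k = integral {t0..t1} (\<lambda>x. \<Sum>l\<in>H - {k}. A x $ k $ l)" for k
  have aHG_eq: "aHG = (\<Sum>k\<in>H. b k)" unfolding aHG_def b_def by (simp add: L.int_ent_sum)
  have aHH_eq: "aHH = (\<Sum>k\<in>H. rr k)" unfolding aHH_def rr_def by (simp add: L.int_ent_sum)
  have rr0: "0 \<le> rr k" for k
    unfolding rr_def
  proof (rule integral_nonneg[OF pcb_integrable[OF finS L.ent_sum_pcb]])
    fix x show "0 \<le> (\<Sum>l\<in>H - {k}. A x $ k $ l)"
    proof (rule sum_nonneg)
      fix l assume "l \<in> H - {k}"
      then have "k \<noteq> l" by auto
      then show "0 \<le> A x $ k $ l" by (rule L.offd)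
    qed
  qed (use t01 in auto)
  have b0: "0 \<le> b k" if "k \<in> H" for k
  proof -
    have "0 \<le> A x $ k $ l" if "l \<in> G" for x l
    proof -
      have "k \<noteq> l" using disj that \<open>k \<in> H\<close> by auto
      then show ?thesis by (rule L.offd)
    qed
    then show ?thesis unfolding b_def
      by (intro integral_nonneg[OF pcb_integrable[OF finS L.ent_sum_pcb]]) (use t01 in \<open>auto intro!: sum_nonneg\<close>)
  qed
  have "Max (b ` H) \<in> b ` H" using H_ne by (intro Max_in) auto
  then obtain kk where kk: "kk \<in> H" "b kk = Max (b ` H)" by auto
  have bmax: "b k \<le> b kk" if "k \<in> H" for k using kk that by (simp add: Max_ge)
  have cardH: "0 < real (card H)" using H_ne by (simp add: card_gt_0_iff)
  have "aHG \<le> real (card H) * b kk" unfolding aHG_eq by (rule sum_bounded_above) (use bmax in auto)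
  then have hle: "aHG / real (card H) \<le> b kk" using cardH by (simp add: field_simps)
  have h0: "0 \<le> aHG / real (card H)" unfolding aHG_eq using b0 by (simp add: sum_nonneg)
  have rrle: "rr kk \<le> aHH" unfolding aHH_eq by (rule member_le_sum[OF kk(1)]) (simp_all add: rr0)
  define X where "X = exp (- aGH) * (exp (- rr kk) * (1 - exp (- b kk)))"
  have beta: "(exp (- aGH) * aHG / real (card H)) / (1 + exp aHH * aHG / real (card H) + exp aHH * aHH) \<le> X"
    using beta_ineq[OF h0 hle rr0 rrle, of aGH] unfolding X_def by simp
  have P1: "\<mu>min + (gmin - \<mu>min) * exp (- aGH) \<le> \<zeta> t1 $ k" if "k \<in> G" for k
    using L.part1[OF disj cover sol mumin[rule_format] gmin_ge gmin_le that] by (simp add: aGH_eq)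
  have P2: "\<zeta> t1 $ k \<le> \<mu>max - (\<mu>max - gmax) * exp (- aGH)" if "k \<in> G" for k
  proof -
    have "- \<mu>max + (- gmax - - \<mu>max) * exp (- aGH) \<le> - \<zeta> t1 $ k"
      using L.part1[OF disj cover solneg, of "- \<mu>max" "- gmax" k] mumax gmax_le gmax_ge that
      by (simp add: aGH_eq)
    then show ?thesis by (simp add: algebra_simps)
  qed
  have Q1: "\<mu>min + (gmin - \<mu>min) * X \<le> \<zeta> t1 $ kk"
    using L.part2[OF disj cover sol mumin[rule_format] gmin_ge gmin_le kk(1)]
    by (simp add: X_def aGH_eq b_def rr_def mult_ac)
  have Q2: "\<zeta> t1 $ kk \<le> \<mu>max - (\<mu>max - gmax) * X"
  proof -
    have "- \<mu>max + (- gmax - - \<mu>max) * X \<le> - \<zeta> t1 $ kk"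
      using L.part2[OF disj cover solneg, of "- \<mu>max" "- gmax" kk] mumax gmax_le gmax_ge kk(1)
      by (simp add: X_def aGH_eq b_def rr_def mult_ac)
    then show ?thesis by (simp add: algebra_simps)
  qed
  have gam1: "0 \<le> gmin - \<mu>min" using gmin_ge by simp
  have gam2: "0 \<le> \<mu>max - gmax" using gmax_le by simp
  let ?\<beta> = "(exp (- aGH) * aHG / real (card H)) / (1 + exp aHH * aHG / real (card H) + exp aHH * aHH)"
  have "(gmin - \<mu>min) * ?\<beta> \<le> (gmin - \<mu>min) * X" by (rule mult_left_mono[OF beta gam1])
  moreover have "(\<mu>max - gmax) * ?\<beta> \<le> (\<mu>max - gmax) * X" by (rule mult_left_mono[OF beta gam2])
  ultimately have "\<mu>min + (gmin - \<mu>min) * ?\<beta> \<le> \<zeta> t1 $ kk \<and> \<zeta> t1 $ kk \<le> \<mu>max - (\<mu>max - gmax) * ?\<beta>"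
    using Q1 Q2 by linarith
  then show ?thesis using P1 P2 kk(1) by blast
qed

end
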